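(* Let $\phi:[0,\infty)\to\mathbb{R}$ be a strictly monotonic, not identically zero function of class $C^2([0,\infty))$ such that $\phi(r)=O(r^{-1/2-\alpha})$ as $r\to\infty$ for some $\alpha>0$. Define, for $r>0$, \[ \Phi(r)=-\int_r^{\infty}\phi'(s)^2\, s\,ds,\qquad \xi(r)=r+\int_r^{\infty}\bigl(1-\mathrm{e}^{\Phi(s)}\bigr)\,ds, \] \[ A(r)=2r^2\int_r^{\infty}\frac{\xi(s)-3m}{s^4}\,\mathrm{e}^{\Phi(s)}\,ds,\qquad f(r)=\mathrm{e}^{-2\Phi(r)}A(r), \] where $m$ is a real parameter satisfying $3m>\xi(0)$ (here $\xi(0)=\lim_{r\to0^+}\xi(r)$). Suppose $r_h>0$ is such that $f(r_h)=0$ and $f(r)>0$ for all $r>r_h$ (the event horizon). Then $A$ is strictly increasing on $(r_h,\infty)$.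
   Context: These quadratures give the general static, spherically symmetric, asymptotically flat solution of the Einstein–Klein–Gordon equations for a minimally coupled scalar field $\phi$ with metric $ds^2=A\,dt^2-dr^2/f-r^2(d\theta^2+\sin^2\theta\,d\varphi^2)$, $m$ being the Schwarzschild mass; the case $3m>\xi(0)$ is the scalar field black hole case. A prime denotes $d/dr$. *)

theory Defs
  imports "HOL-Analysis.Analysis" "HOL-Library.Landau_Symbols"
begin

text \<open>dphi stands for the derivative phi' of the scalar field.\<close>

definition Phi :: "(real \<Rightarrow> real) \<Rightarrow> real \<Rightarrow> real" where
  "Phi dphi r = - integral {r..} (\<lambda>s. (dphi s)^2 * s)"

definition xi :: "(real \<Rightarrow> real) \<Rightarrow> real \<Rightarrow> real" where
  "xi dphi r = r + integral {r..} (\<lambda>s. 1 - exp (Phi dphi s))"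

definition Afun :: "(real \<Rightarrow> real) \<Rightarrow> real \<Rightarrow> real \<Rightarrow> real" where
  "Afun dphi m r = 2 * r^2 * integral {r..} (\<lambda>s. (xi dphi s - 3*m) / s^4 * exp (Phi dphi s))"

definition ffun :: "(real \<Rightarrow> real) \<Rightarrow> real \<Rightarrow> real \<Rightarrow> real" where
  "ffun dphi m r = exp (- 2 * Phi dphi r) * Afun dphi m r"

end

theory Submission
  imports Defs
begin

lemma tail_split:
  fixes f :: "real \<Rightarrow> real"
  assumes "f integrable_on {b..}" "x \<le> b" "continuous_on {x..b} f"
  shows "integral {x..} f = integral {x..b} f + integral {b..} f"
proof -
  have "integral ({x..b} \<union> {b..}) f = integral {x..b} f + integral {b..} f"
  proof (rule integral_Un)
    have "{x..b} \<inter> {b..} = {b}" using assms(2) by auto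
    then show "negligible ({x..b} \<inter> {b..})" by simp
  qed (use integrable_continuous_interval[OF assms(3)] assms(1) in auto)
  moreover have "{x..b} \<union> {b..} = {x..}" using assms(2) by auto
  ultimately show ?thesis by simp
qed

lemma tail_deriv:
  fixes f :: "real \<Rightarrow> real"
  assumes cont: "continuous_on {a<..} f" and int: "\<And>x. x > a \<Longrightarrow> f integrable_on {x..}"
    and r: "r > a"
  shows "((\<lambda>x. integral {x..} f) has_real_derivative (- f r)) (at r)"
proof -
  define c where "c = (a + r) / 2"
  define b where "b = r + 1"
  have c: "a < c" "c < r" "r < b" using r by (auto simp: c_def b_def)
  have cb: "continuous_on {c..b} f"
    by (rule continuous_on_subset[OF cont]) (use c in auto)
  have "((\<lambda>x. integral {x..b} f) has_real_derivative - f r) (at r within {c..b})"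
    by (rule integral_has_real_derivative'[OF cb]) (use c in auto)
  moreover have "at r within {c..b} = at r"
    by (rule at_within_interior) (use c in auto)
  ultimately have d: "((\<lambda>x. integral {x..b} f + integral {b..} f) has_real_derivative - f r) (at r)"
    by (auto intro!: derivative_eq_intros)
  show ?thesis
  proof (rule has_field_derivative_transform_within_open[OF d, of "{c<..<b}"])
    fix x assume x: "x \<in> {c<..<b}"
    show "integral {x..b} f + integral {b..} f = integral {x..} f"
      by (rule tail_split[symmetric]) (use x c int in \<open>auto intro: continuous_on_subset[OF cont]\<close>)
  qed (use c in auto)
qed


theorem proposition1:
  fixes \<phi> dphi ddphi :: "real \<Rightarrow> real" and \<alpha> m r\<^sub>h xi0 :: real
  assumes d1: "\<And>r. r \<ge> 0 \<Longrightarrow> (\<phi> has_real_derivative dphi r) (at r within {0..})"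
      and d2: "\<And>r. r \<ge> 0 \<Longrightarrow> (dphi has_real_derivative ddphi r) (at r within {0..})"
      and c2: "continuous_on {0..} ddphi"
      and smono: "strict_mono_on {0..} \<phi> \<or> strict_antimono_on {0..} \<phi>"
      and nonzero: "\<exists>r\<ge>0. \<phi> r \<noteq> 0"
      and alpha: "\<alpha> > 0"
      and decay: "\<phi> \<in> O[at_top](\<lambda>r. r powr (-1/2 - \<alpha>))"
      and int_Phi: "\<And>r. r > 0 \<Longrightarrow> (\<lambda>s. (dphi s)^2 * s) integrable_on {r..}"
      and int_xi: "\<And>r. r > 0 \<Longrightarrow> (\<lambda>s. 1 - exp (Phi dphi s)) integrable_on {r..}"
      and xi0: "(xi dphi \<longlongrightarrow> xi0) (at_right 0)"
      and mass: "3 * m > xi0"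
      and rh_pos: "r\<^sub>h > 0"
      and horizon: "ffun dphi m r\<^sub>h = 0"
      and outside: "\<And>r. r > r\<^sub>h \<Longrightarrow> ffun dphi m r > 0"
  shows "strict_mono_on {r\<^sub>h<..} (Afun dphi m)"
proof -
  define p where "p = (\<lambda>s. (dphi s)^2 * s)"
  define q where "q = (\<lambda>s. 1 - exp (Phi dphi s))"
  define g where "g = (\<lambda>s. (xi dphi s - 3*m) / s^4 * exp (Phi dphi s))"
  define E where "E = (\<lambda>s. exp (Phi dphi s))"
  have dcont: "isCont dphi r" if "r > 0" for r
  proof -
    have "at r within {0..} = at r" by (rule at_within_interior) (use that in auto)
    with d2[of r] that have "DERIV dphi r :> ddphi r" by simp
    then show ?thesis by (rule DERIV_isCont)
  qed
  have pc: "continuous_on {0<..} p"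
    unfolding p_def by (intro continuous_at_imp_continuous_on ballI continuous_intros dcont) auto
  have dPhi: "(Phi dphi has_real_derivative p r) (at r)" if "r > 0" for r
  proof -
    have "Phi dphi = (\<lambda>x. - integral {x..} p)" unfolding Phi_def p_def by (rule ext) simp
    moreover have "((\<lambda>x. integral {x..} p) has_real_derivative - p r) (at r)"
      by (rule tail_deriv[OF pc]) (use int_Phi that in \<open>auto simp: p_def\<close>)
    ultimately show ?thesis using DERIV_minus by fastforce
  qed
  have Phic: "isCont (Phi dphi) r" if "r > 0" for r using dPhi[OF that] by (rule DERIV_isCont)
  have qc: "continuous_on {0<..} q"
    unfolding q_def by (intro continuous_at_imp_continuous_on ballI continuous_intros Phic) auto
  have dxi: "(xi dphi has_real_derivative E r) (at r)" if "r > 0" for r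
  proof -
    have "xi dphi = (\<lambda>x. x + integral {x..} q)" unfolding xi_def q_def by (rule ext) simp
    moreover have "((\<lambda>x. integral {x..} q) has_real_derivative - q r) (at r)"
      by (rule tail_deriv[OF qc]) (use int_xi that in \<open>auto simp: q_def\<close>)
    ultimately show ?thesis unfolding E_def q_def
      by (auto intro!: derivative_eq_intros)
  qed
  have xic: "isCont (xi dphi) r" if "r > 0" for r using dxi[OF that] by (rule DERIV_isCont)
  have Phimono: "Phi dphi x \<le> Phi dphi y" if "0 < x" "x \<le> y" for x y
  proof (rule DERIV_nonneg_imp_nondecreasing[OF that(2)])
    fix z assume z: "x \<le> z" "z \<le> y"
    then have "z > 0" using that by simp
    then show "\<exists>d. (Phi dphi has_real_derivative d) (at z) \<and> 0 \<le> d"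
      using dPhi[of z] by (intro exI[of _ "p z"]) (simp add: p_def)
  qed
  have Emono: "E x \<le> E y" if "0 < x" "x \<le> y" for x y
    using Phimono[OF that] by (simp add: E_def)
  have Epos: "E x > 0" for x by (simp add: E_def)
  have Apos: "Afun dphi m r > 0" if "r > r\<^sub>h" for r
    using outside[OF that] by (simp add: ffun_def zero_less_mult_iff)
  have Aeq: "Afun dphi m = (\<lambda>x. 2 * x^2 * integral {x..} g)"
    unfolding Afun_def g_def by (rule ext) simp
  have gint: "g integrable_on {r..}" if "r > r\<^sub>h" for r
  proof (rule ccontr)
    assume "\<not> g integrable_on {r..}"
    then have "integral {r..} g = 0" by (rule not_integrable_integral)
    with Apos[OF that] Aeq show False by simp
  qed
  have gc: "continuous_on {r\<^sub>h<..} g"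
    unfolding g_def using rh_pos
    by (intro continuous_at_imp_continuous_on ballI continuous_intros Phic xic) auto
  have dI: "((\<lambda>x. integral {x..} g) has_real_derivative - g r) (at r)" if "r > r\<^sub>h" for r
    by (rule tail_deriv[OF gc gint that])
  have dA: "(Afun dphi m has_real_derivative (2*(2*r)*integral {r..} g + 2*r^2*(- g r))) (at r)"
    if "r > r\<^sub>h" for r
    unfolding Aeq using dI[OF that] by (auto intro!: derivative_eq_intros)
  have xilow: "xi dphi r - xi0 \<le> r * E r" if "r > 0" for r
  proof -
    have "xi dphi r - r * E r \<le> xi0"
    proof (rule tendsto_lowerbound[OF xi0])
      show "\<forall>\<^sub>F x in at_right 0. xi dphi r - r * E r \<le> xi dphi x"
      proof (rule eventually_at_rightI[of 0 r])
        fix e :: real assume "e \<in> {0<..<r}"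
        then have e: "0 < e" "e < r" by auto
        have "e * E r - xi dphi e \<le> r * E r - xi dphi r"
        proof (rule DERIV_nonneg_imp_nondecreasing[of e r "\<lambda>x. x * E r - xi dphi x"])
          fix x assume x: "e \<le> x" "x \<le> r"
          show "\<exists>y. ((\<lambda>x. x * E r - xi dphi x) has_real_derivative y) (at x) \<and> 0 \<le> y"
            using dxi[of x] x e Emono[of x r]
            by (intro exI[of _ "E r - E x"]) (auto intro!: derivative_eq_intros)
        qed (use e in auto)
        then show "xi dphi r - r * E r \<le> xi dphi e"
          using e Epos[of r] by (smt (verit) mult_pos_pos)
      qed (use that in auto)
    qed simp
    then show ?thesis by simp
  qed
  have key: "2*(2*r)*integral {r..} g + 2*r^2*(- g r) > 0" if r: "r > r\<^sub>h" for r
  proof -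
    have r0: "r > 0" using r rh_pos by simp
    have Ipos: "integral {r..} g > 0"
      using Apos[OF r] r0 unfolding Aeq by (simp add: zero_less_mult_iff)
    define W where "W = xi dphi r - 3*m"
    show ?thesis
    proof (cases "W \<le> 0")
      case True
      then have "g r \<le> 0" unfolding g_def W_def using r0
        by (simp add: mult_nonpos_nonneg divide_nonpos_pos)
      moreover have "2*(2*r)*integral {r..} g > 0" using Ipos r0 by simp
      moreover have "2*r^2*(- g r) \<ge> 0" using \<open>g r \<le> 0\<close> by (simp add: mult_nonpos_nonneg)
      ultimately show ?thesis by linarith
    next
      case False
      then have W: "W > 0" by simp
      have WrE: "W < r * E r" using xilow[OF r0] mass unfolding W_def by simp
      have xigrow: "xi dphi s - 3*m \<ge> W + (s - r) * E r" if s: "s \<ge> r" for s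
      proof -
        have "xi dphi r - r * E r \<le> xi dphi s - s * E r"
        proof (rule DERIV_nonneg_imp_nondecreasing[of r s "\<lambda>x. xi dphi x - x * E r"])
          fix x assume x: "r \<le> x" "x \<le> s"
          show "\<exists>y. ((\<lambda>x. xi dphi x - x * E r) has_real_derivative y) (at x) \<and> 0 \<le> y"
            using dxi[of x] x r0 Emono[of r x]
            by (intro exI[of _ "E x - E r"]) (auto intro!: derivative_eq_intros)
        qed (use s in auto)
        then show ?thesis unfolding W_def by (simp add: algebra_simps)
      qed
      define h where "h = (\<lambda>s::real. E r * (W - r * E r) * (1 / s^4) + (E r)^2 * (1 / s^3))"
      have hint: "(h has_integral (E r * (W - r * E r) * (1 / (3 * r^3)) + (E r)^2 * (1 / (2 * r^2)))) {r..}"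
        unfolding h_def
        using has_integral_inverse_power_to_inf[of 4 r] has_integral_inverse_power_to_inf[of 3 r] r0
        by (intro has_integral_add has_integral_mult_right) auto
      have hle: "h s \<le> g s" if s: "s \<in> {r..}" for s
      proof -
        have s0: "s > 0" using s r0 by simp
        have "h s = (W + (s - r) * E r) * E r / s^4"
          unfolding h_def using s0 by (simp add: field_simps power_def)
        also have "\<dots> \<le> (xi dphi s - 3*m) * E s / s^4"
        proof (rule divide_right_mono)
          have a: "W + (s - r) * E r > 0" using W s Epos[of r] by (simp add: add_pos_nonneg)
          show "(W + (s - r) * E r) * E r \<le> (xi dphi s - 3*m) * E s"
            by (rule mult_mono) (use xigrow[of s] s Emono[of r s] r0 a Epos[of r] in auto)
        qed simp
        also have "\<dots> = g s" unfolding g_def E_def by simp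
        finally show ?thesis .
      qed
      have "integral {r..} h \<le> integral {r..} g"
        by (rule integral_le[OF _ gint[OF r] hle]) (use hint in auto)
      then have Ilow: "integral {r..} g \<ge> E r * (W - r * E r) * (1 / (3 * r^3)) + (E r)^2 * (1 / (2 * r^2))"
        using integral_unique[OF hint] by simp
      have gr: "g r = W * E r / r^4" unfolding g_def W_def E_def by simp
      have L1: "2*(2*r)*integral {r..} g + 2*r^2*(- g r) \<ge>
            4*r*(E r * (W - r * E r) * (1 / (3 * r^3)) + (E r)^2 * (1 / (2 * r^2))) - 2 * W * E r / r^2"
      proof -
        have "4*r*integral {r..} g \<ge> 4*r*(E r * (W - r * E r) * (1 / (3 * r^3)) + (E r)^2 * (1 / (2 * r^2)))"
          using Ilow r0 by (intro mult_left_mono) auto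
        moreover have "2*r^2*(- g r) = - (2 * W * E r / r^2)"
          unfolding gr using r0 by (simp add: power_def field_simps)
        ultimately show ?thesis by linarith
      qed
      have L2: "4*r*(E r * (W - r * E r) * (1 / (3 * r^3)) + (E r)^2 * (1 / (2 * r^2))) - 2 * W * E r / r^2
            = E r * (2 * (r * E r - W)) / (3 * r^2)"
        using r0 by (simp add: power_def field_simps)
      have L3: "E r * (2 * (r * E r - W)) / (3 * r^2) > 0" using WrE Epos[of r] r0 by simp
      from L1 L2 L3 show ?thesis by linarith
    qed
  qed
  show ?thesis
    unfolding strict_mono_on_def
  proof (intro allI impI)
    fix x y assume xy: "x \<in> {r\<^sub>h<..} \<and> y \<in> {r\<^sub>h<..} \<and> x < y"
    have lt: "x < y" using xy by simp
    have der: "\<exists>d. (Afun dphi m has_real_derivative d) (at z) \<and> d > 0" if "x < z" "z < y" for z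
    proof -
      have "z > r\<^sub>h" using xy that by simp
      then show ?thesis using dA key by blast
    qed
    have cont: "continuous_on {x..y} (Afun dphi m)"
    proof (intro continuous_at_imp_continuous_on ballI)
      fix z assume "z \<in> {x..y}"
      then have "z > r\<^sub>h" using xy by auto
      then show "isCont (Afun dphi m) z" using dA by (blast intro: DERIV_isCont)
    qed
    show "Afun dphi m x < Afun dphi m y"
      by (rule DERIV_pos_imp_increasing_open[OF lt der cont])
  qed
qed

end
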